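(* For $k\in(0,\infty)$ let $\mathcal{T}_{(k)}$ be the Weibull law with tail function $\overline{F}_{(k)}(x)=e^{-x^k}$, $x\in[0,\infty)$, and let $l\in\mathbb{N}$, $l\geq2$. Each of the following is equivalent to $k\leq1$: (a) $(\mathcal{T}_{(k)})^{\mathcal{R}}_l\leq_{\mathrm{st}}\mathcal{T}_{(k)}$ for all reset laws $\mathcal{R}$; (b) $(\mathcal{T}_{(k)})^{\delta_r}_l\leq_{\mathrm{st}}\mathcal{T}_{(k)}$ for all $r\in(0,\infty)$; (c) $\lambda^k+l(1-\lambda)^k\geq1$ for all $\lambda\in[0,1]$; (d) $(\mathcal{T}_{(k)})^{\mathrm{Exp}(\mu)}_l\leq_{\mathrm{st}}\mathcal{T}_{(k)}$ for all $\mu\in(0,\infty)$; (e) $\int_0^1e^{-t^k(u^k+l(1-u)^k-1)}\,\mathrm{d}u\leq1$ for all $t\in(0,\infty)$.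
   Context: A reset law is a probability law $\mathcal{R}$ on the Borel sets of $[0,\infty]$ with $\mathcal{R}((0,\infty])>0$ and $\mathcal{R}([0,\infty))>0$. $l$-fold reset: given a law $\mathcal{T}$ on $[0,\infty]$, a reset law $\mathcal{R}$ and $l\in\mathbb{N}$, let $(T^j_i)_{j\in\mathbb{N},\,1\leq i\leq l^{j-1}}$ be i.i.d. with law $\mathcal{T}$ and $(R_j)_{j\in\mathbb{N}}$ an independent i.i.d. sequence with law $\mathcal{R}$; put $M_j:=\min_{1\leq i\leq l^{j-1}}T^j_i$; then $\mathcal{T}^{\mathcal{R}}_l$ is the law of $\tilde T$ defined a.s. by $\tilde T=R_1+\cdots+R_{j-1}+M_j$ on $\{R_1<M_1,\ldots,R_{j-1}<M_{j-1},M_j\leq R_j\}$, $j\in\mathbb{N}$. $\delta_r$ is the Dirac mass at $r$, $\mathrm{Exp}(\mu)$ the exponential law with mean $\mu^{-1}$. $\mathcal{A}\leq_{\mathrm{st}}\mathcal{B}$ means $\mathcal{A}((t,\infty])\leq\mathcal{B}((t,\infty])$ for all $t\in[0,\infty)$. *)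

theory Defs
  imports "HOL-Probability.Probability"
begin

text \<open>Laws on [0,\<infinity>] are probability measures on the Borel sets of ennreal.\<close>

definition reset_law_cond :: "ennreal measure \<Rightarrow> bool" where
  "reset_law_cond R \<longleftrightarrow> prob_space R \<and> sets R = sets borel
     \<and> emeasure R {0<..} > 0 \<and> emeasure R {..<top} > 0"

text \<open>Underlying probability space: i.i.d. family T(j,i) with law T (only i < l^j is used
  at stage j, stages indexed from 0) and an independent i.i.d. sequence R(j) with law R.\<close>

definition reset_space :: "ennreal measure \<Rightarrow> ennreal measure \<Rightarrow>
    ((nat \<times> nat \<Rightarrow> ennreal) \<times> (nat \<Rightarrow> ennreal)) measure" where
  "reset_space T R = (PiM UNIV (\<lambda>_::nat\<times>nat. T)) \<Otimes>\<^sub>M (PiM UNIV (\<lambda>_::nat. R))"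

definition reset_min :: "nat \<Rightarrow> (nat \<times> nat \<Rightarrow> ennreal) \<Rightarrow> nat \<Rightarrow> ennreal" where
  "reset_min l Tv j = Min ((\<lambda>i. Tv (j, i)) ` {..<l ^ j})"

definition reset_time :: "nat \<Rightarrow> (nat \<times> nat \<Rightarrow> ennreal) \<times> (nat \<Rightarrow> ennreal) \<Rightarrow> ennreal" where
  "reset_time l \<omega> =
     (let Tv = fst \<omega>; Rv = snd \<omega>; M = reset_min l Tv in
      if \<exists>j. M j \<le> Rv j
      then (let j = (LEAST j. M j \<le> Rv j) in (\<Sum>m<j. Rv m) + M j)
      else top)"

definition reset_law :: "ennreal measure \<Rightarrow> ennreal measure \<Rightarrow> nat \<Rightarrow> ennreal measure" where
  "reset_law T R l = distr (reset_space T R) borel (reset_time l)"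

definition st_le :: "ennreal measure \<Rightarrow> ennreal measure \<Rightarrow> bool" where
  "st_le A B \<longleftrightarrow> (\<forall>t::ennreal. t \<noteq> top \<longrightarrow> emeasure A {t<..} \<le> emeasure B {t<..})"

definition weibull_law :: "real \<Rightarrow> ennreal measure" where
  "weibull_law k = distr (density lborel
      (\<lambda>x::real. ennreal (if x > 0 then k * x powr (k - 1) * exp (- (x powr k)) else 0)))
      borel ennreal"

definition dirac_law :: "real \<Rightarrow> ennreal measure" where
  "dirac_law r = return borel (ennreal r)"

definition exp_law :: "real \<Rightarrow> ennreal measure" where
  "exp_law \<mu> = distr (density lborel (\<lambda>x. ennreal (exponential_density \<mu> x))) borel ennreal"

end

theory Submission
  imports Defs
begin

lemma density_tail:
  fixes f F :: "real \<Rightarrow> real" and c :: real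
  assumes fm: "f \<in> borel_measurable borel"
  and D: "\<And>x. c < x \<Longrightarrow> DERIV F x :> f x" and C: "\<And>x. c < x \<Longrightarrow> isCont f x"
  and N: "\<And>x. c < x \<Longrightarrow> 0 \<le> f x"
  and A: "(F \<longlongrightarrow> F c) (at_right c)" and B: "(F \<longlongrightarrow> 0) at_top"
  shows "emeasure (density lborel (\<lambda>x. ennreal (f x))) {c<..} = ennreal (- F c)"
proof -
  have ei: "einterval (ereal c) \<infinity> = {c<..}" by (auto simp: einterval_def)
  have A': "((F \<circ> real_of_ereal) \<longlongrightarrow> F c) (at_right (ereal c))"
    using A by (simp add: ereal_tendsto_simps1)
  have B': "((F \<circ> real_of_ereal) \<longlongrightarrow> 0) (at_left (\<infinity>::ereal))"
    using B by (simp add: ereal_tendsto_simps1)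
  have si: "set_integrable lborel {c<..} f" and eq: "(LBINT x=ereal c..\<infinity>. f x) = 0 - F c"
    using interval_integral_FTC_nonneg[of "ereal c" \<infinity> F f "F c" 0, OF _ _ _ _ A' B'] D C N ei
    by auto
  have "emeasure (density lborel (\<lambda>x. ennreal (f x))) {c<..} = (\<integral>\<^sup>+ x. ennreal (f x) * indicator {c<..} x \<partial>lborel)"
    using fm by (subst emeasure_density) auto
  also have "\<dots> = (\<integral>\<^sup>+ x. ennreal (indicator {c<..} x *\<^sub>R f x) \<partial>lborel)"
    by (intro nn_integral_cong) (auto split: split_indicator)
  also have "\<dots> = ennreal (LINT x|lborel. indicator {c<..} x *\<^sub>R f x)"
    using si N by (intro nn_integral_eq_integral) (auto simp: set_integrable_def split: split_indicator)
  also have "(LINT x|lborel. indicator {c<..} x *\<^sub>R f x) = - F c"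
    using eq ei by (simp add: interval_lebesgue_integral_def set_lebesgue_integral_def)
  finally show ?thesis .
qed

lemma my_powr_at_top:
  assumes "(p::real) > 0"
  shows   "filterlim (\<lambda>x. x powr p) at_top at_top"
proof (subst filterlim_cong[OF refl refl])
  show "LIM x at_top. exp (p * ln x) :> at_top"
    by (rule filterlim_compose[OF exp_at_top filterlim_tendsto_pos_mult_at_top[OF tendsto_const]])
       (simp_all add: ln_at_top assms)
  show "eventually (\<lambda>x. x powr p = exp (p * ln x)) at_top"
    using eventually_gt_at_top[of 0] by eventually_elim (simp add: powr_def)
qed

lemma ennreal_vimage_gt: "(0::real) \<le> c \<Longrightarrow> ennreal -` {ennreal c<..} = {c<..}"
  by (auto simp: ennreal_less_iff)

lemma weibull_tail_real:
  fixes k c :: real assumes k: "k > 0" and c: "c \<ge> 0"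
  shows "emeasure (density lborel (\<lambda>x::real. ennreal (if x > 0 then k * x powr (k - 1) * exp (- (x powr k)) else 0))) {c<..}
     = ennreal (exp (- (c powr k)))"
proof -
  let ?f = "\<lambda>x::real. if x > 0 then k * x powr (k - 1) * exp (- (x powr k)) else 0"
  let ?F = "\<lambda>x::real. - exp (- (x powr k))"
  have "emeasure (density lborel (\<lambda>x. ennreal (?f x))) {c<..} = ennreal (- ?F c)"
  proof (rule density_tail)
    show "?f \<in> borel_measurable borel" by measurable
    fix x :: real assume x: "c < x"
    then have x0: "x > 0" using c by simp
    have "DERIV ?F x :> exp (- (x powr k)) * (k * x powr (k - 1))"
      using x0 by (auto intro!: derivative_eq_intros simp: powr_diff field_simps)
    then show "DERIV ?F x :> ?f x" using x0 by (simp add: mult.commute mult.left_commute)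
    have ev: "eventually (\<lambda>y. ?f y = k * y powr (k - 1) * exp (- (y powr k))) (nhds x)"
      using eventually_nhds_in_open[of "{0<..}" x] x0 by (auto elim!: eventually_mono)
    show "isCont ?f x"
      unfolding isCont_cong[OF ev] using x0 by (intro continuous_intros) auto
    show "0 \<le> ?f x" using k by auto
  next
    show "(?F \<longlongrightarrow> ?F c) (at_right c)"
    proof (cases "c = 0")
      case True
      have "((\<lambda>x. x powr k) \<longlongrightarrow> 0) (at_right (0::real))"
        by (rule tendsto_zero_powrI) (auto simp: k eventually_at_right_less intro: eventually_at_rightI[of 0 1])
      from tendsto_minus[OF tendsto_exp[OF tendsto_minus[OF this]]] show ?thesis using True k by simp
    next
      case False
      then have "c > 0" using c by simp
      then have "isCont ?F c" by (intro continuous_intros) auto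
      then show ?thesis by (simp add: isCont_def filterlim_at_split)
    qed
  next
    have "((\<lambda>x. exp (- (x powr k))) \<longlongrightarrow> 0) at_top"
      by (rule filterlim_compose[OF exp_at_bot]) (auto simp: filterlim_uminus_at_bot intro: my_powr_at_top k)
    then show "(?F \<longlongrightarrow> 0) at_top" using tendsto_minus by fastforce
  qed
  then show ?thesis by simp
qed

lemma weibull_tail:
  fixes k c :: real assumes k: "k > 0" and c: "c \<ge> 0"
  shows "emeasure (weibull_law k) {ennreal c<..} = ennreal (exp (- (c powr k)))"
  unfolding weibull_law_def
  by (subst emeasure_distr) (auto simp: ennreal_vimage_gt[OF c] weibull_tail_real[OF k c])

lemma sets_weibull[simp]: "sets (weibull_law k) = sets borel"
  by (simp add: weibull_law_def)

lemma prob_space_weibull: assumes k: "k > 0" shows "prob_space (weibull_law k)"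
proof
  let ?f = "\<lambda>x::real. ennreal (if x > 0 then k * x powr (k - 1) * exp (- (x powr k)) else 0)"
  have "emeasure (weibull_law k) (space (weibull_law k)) = emeasure (density lborel ?f) UNIV"
    unfolding weibull_law_def by (subst emeasure_distr) auto
  also have "\<dots> = (\<integral>\<^sup>+ x. ?f x * indicator UNIV x \<partial>lborel)"
    by (subst emeasure_density) auto
  also have "\<dots> = (\<integral>\<^sup>+ x. ?f x * indicator {0<..} x \<partial>lborel)"
    by (intro nn_integral_cong) (auto split: split_indicator)
  also have "\<dots> = emeasure (density lborel ?f) {0<..}"
    by (subst emeasure_density) auto
  also have "\<dots> = 1" using weibull_tail_real[OF k, of 0] k by simp
  finally show "emeasure (weibull_law k) (space (weibull_law k)) = 1" .
qed

lemma sets_exp_law[simp]: "sets (exp_law m) = sets borel"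
  by (simp add: exp_law_def)

lemma prob_space_exp_law: "m > 0 \<Longrightarrow> prob_space (exp_law m)"
  unfolding exp_law_def
  by (rule prob_space.prob_space_distr[OF prob_space_exponential_density]) auto

lemma exp_tail:
  fixes m c :: real assumes m: "m > 0" and c: "c \<ge> 0"
  shows "emeasure (exp_law m) {ennreal c<..} = ennreal (exp (- c * m))"
proof -
  let ?f = "exponential_density m"
  let ?F = "\<lambda>x::real. - exp (- x * m)"
  have "emeasure (density lborel (\<lambda>x. ennreal (?f x))) {c<..} = ennreal (- ?F c)"
  proof (rule density_tail)
    show "?f \<in> borel_measurable borel" by measurable
    fix x :: real assume x: "c < x"
    then have x0: "x > 0" using c by simp
    have "DERIV ?F x :> exp (- x * m) * m"
      by (auto intro!: derivative_eq_intros)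
    then show "DERIV ?F x :> ?f x" using x0 by (simp add: exponential_density_def mult.commute)
    have "eventually (\<lambda>y. y \<in> {0<..}) (nhds x)"
      using eventually_nhds_in_open[of "{0<..}" x] x0 by auto
    then have ev: "eventually (\<lambda>y. ?f y = m * exp (- y * m)) (nhds x)"
      by eventually_elim (simp add: exponential_density_def)
    show "isCont ?f x"
      unfolding isCont_cong[OF ev] by (intro continuous_intros)
    show "0 \<le> ?f x" using m by (simp add: exponential_density_nonneg)
  next
    have "isCont ?F c" by (intro continuous_intros)
    then show "(?F \<longlongrightarrow> ?F c) (at_right c)" by (simp add: isCont_def filterlim_at_split)
  next
    have *: "((\<lambda>t. exp (- t * m)) \<longlongrightarrow> 0) at_top"
      using m by (auto intro!: exp_at_bot[THEN filterlim_compose] filterlim_tendsto_pos_mult_at_top filterlim_ident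
             simp: filterlim_uminus_at_bot mult.commute[of _ m])
    then show "(?F \<longlongrightarrow> 0) at_top" using tendsto_minus by fastforce
  qed
  then show ?thesis
    unfolding exp_law_def
    by (subst emeasure_distr) (auto simp: ennreal_vimage_gt[OF c])
qed

lemma exp_interval:
  fixes m a b :: real assumes m: "m > 0" and a: "0 \<le> a" and ab: "a \<le> b"
  shows "emeasure (exp_law m) {ennreal a<..ennreal b} = ennreal (exp (- a * m) - exp (- b * m))"
proof -
  interpret prob_space "exp_law m" using prob_space_exp_law[OF m] .
  have b: "0 \<le> b" using a ab by simp
  have eq: "{ennreal a<..ennreal b} = {ennreal a<..} - {ennreal b<..}" by auto
  have "emeasure (exp_law m) {ennreal a<..ennreal b} = emeasure (exp_law m) {ennreal a<..} - emeasure (exp_law m) {ennreal b<..}"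
    unfolding eq using ab by (intro emeasure_Diff) (auto simp: ennreal_leI)
  also have "\<dots> = ennreal (exp (- a * m) - exp (- b * m))"
    using exp_tail[OF m a] exp_tail[OF m b] by (simp add: ennreal_minus)
  finally show ?thesis .
qed

lemma reset_law_cond_exp: assumes m: "m > 0" shows "reset_law_cond (exp_law m)"
proof -
  interpret prob_space "exp_law m" using prob_space_exp_law[OF m] .
  have "emeasure (exp_law m) {0<..} = 1" using exp_tail[OF m, of 0] by simp
  moreover have "emeasure (exp_law m) {..<top} \<ge> emeasure (exp_law m) {ennreal 0<..ennreal 1}"
    by (intro emeasure_mono) (auto intro: order.strict_trans1[OF _ ennreal_one_less_top])
  moreover have "emeasure (exp_law m) {ennreal 0<..ennreal 1} > 0"
    using exp_interval[OF m, of 0 1] m by simp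
  ultimately show ?thesis unfolding reset_law_cond_def using prob_space_exp_law[OF m] by auto
qed

lemma reset_law_cond_dirac: assumes r: "r > 0" shows "reset_law_cond (dirac_law r)"
  unfolding reset_law_cond_def dirac_law_def using r
  by (auto intro!: prob_space_return)

definition fstage :: "nat \<Rightarrow> (nat \<times> nat \<Rightarrow> ennreal) \<times> (nat \<Rightarrow> ennreal) \<Rightarrow> nat \<Rightarrow> ennreal" where
  "fstage l \<omega> j = (if (\<forall>m<j. snd \<omega> m < reset_min l (fst \<omega>) m) \<and> reset_min l (fst \<omega>) j \<le> snd \<omega> j
     then (\<Sum>m<j. snd \<omega> m) + reset_min l (fst \<omega>) j else top)"

lemma reset_time_INF: "reset_time l \<omega> = (INF j. fstage l \<omega> j)"
proof (cases "\<exists>j. reset_min l (fst \<omega>) j \<le> snd \<omega> j")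
  case True
  define J where "J = (LEAST j. reset_min l (fst \<omega>) j \<le> snd \<omega> j)"
  have J: "reset_min l (fst \<omega>) J \<le> snd \<omega> J" unfolding J_def using True by (metis LeastI)
  have lt: "m < J \<Longrightarrow> snd \<omega> m < reset_min l (fst \<omega>) m" for m
    unfolding J_def using not_less_Least not_le by blast
  have fJ: "fstage l \<omega> J = (\<Sum>m<J. snd \<omega> m) + reset_min l (fst \<omega>) J"
    using J lt by (simp add: fstage_def)
  have other: "j \<noteq> J \<Longrightarrow> fstage l \<omega> j = top" for j
  proof -
    assume "j \<noteq> J"
    then consider "j < J" | "J < j" by linarith
    then show ?thesis
    proof cases
      case 1 then show ?thesis using lt[of j] by (auto simp: fstage_def)
    next
      case 2 then show ?thesis using J by (auto simp: fstage_def not_less)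
    qed
  qed
  have "(INF j. fstage l \<omega> j) = fstage l \<omega> J"
  proof (rule antisym)
    show "(INF j. fstage l \<omega> j) \<le> fstage l \<omega> J" by (rule INF_lower) simp
    show "fstage l \<omega> J \<le> (INF j. fstage l \<omega> j)"
      by (rule INF_greatest) (metis order_refl other top_greatest)
  qed
  then show ?thesis using True fJ by (simp add: reset_time_def J_def Let_def)
next
  case False
  then have "fstage l \<omega> j = top" for j by (auto simp: fstage_def)
  then show ?thesis using False by (simp add: reset_time_def)
qed

lemma sets_reset_space: assumes "sets T = sets borel" "sets R = sets borel"
  shows "sets (reset_space T R) = sets (reset_space borel borel)"
  unfolding reset_space_def using assms
  by (intro sets_pair_measure_cong sets_PiM_cong) auto

lemma measurable_reset_min[measurable]:
  "(\<lambda>\<omega>. reset_min l (fst \<omega>) m) \<in> borel_measurable (reset_space borel borel)"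
  unfolding reset_min_def reset_space_def by measurable

lemma measurable_snd_comp[measurable]:
  "(\<lambda>\<omega>. snd \<omega> m) \<in> borel_measurable (reset_space borel borel)"
  unfolding reset_space_def by measurable

lemma measurable_fstage: "(\<lambda>\<omega>. fstage l \<omega> j) \<in> borel_measurable (reset_space borel borel)"
  unfolding fstage_def by measurable

lemma measurable_reset_time:
  assumes "sets T = sets borel" "sets R = sets borel"
  shows "reset_time l \<in> borel_measurable (reset_space T R)"
proof -
  have "reset_time l \<in> borel_measurable (reset_space borel borel)"
    unfolding reset_time_INF[abs_def] by (intro borel_measurable_INF measurable_fstage) auto
  then show ?thesis using measurable_cong_sets[OF sets_reset_space[OF assms] refl] by blast
qed

lemma reset_min_0[simp]: "reset_min l Tv 0 = Tv (0,0)"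
  by (simp add: reset_min_def lessThan_Suc)

lemma reset_min_gt_iff: "l \<ge> 1 \<Longrightarrow> c < reset_min l Tv j \<longleftrightarrow> (\<forall>i<l^j. c < Tv (j,i))"
  unfolding reset_min_def by (subst Min_gr_iff) (auto simp: lessThan_empty_iff)

lemma reset_time_cases:
  assumes "\<exists>j. reset_min l (fst \<omega>) j \<le> snd \<omega> j"
  obtains J where "reset_time l \<omega> = (\<Sum>m<J. snd \<omega> m) + reset_min l (fst \<omega>) J"
    "reset_min l (fst \<omega>) J \<le> snd \<omega> J" "\<And>m. m < J \<Longrightarrow> snd \<omega> m < reset_min l (fst \<omega>) m"
proof -
  define J where "J = (LEAST j. reset_min l (fst \<omega>) j \<le> snd \<omega> j)"
  have J: "reset_min l (fst \<omega>) J \<le> snd \<omega> J" unfolding J_def using assms by (metis LeastI)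
  have lt: "m < J \<Longrightarrow> snd \<omega> m < reset_min l (fst \<omega>) m" for m
    unfolding J_def using not_less_Least not_le by blast
  show ?thesis using that[OF _ J lt] assms by (simp add: reset_time_def J_def Let_def)
qed

lemma reset_time_none:
  "\<not> (\<exists>j. reset_min l (fst \<omega>) j \<le> snd \<omega> j) \<Longrightarrow> reset_time l \<omega> = top"
  by (simp add: reset_time_def)

lemma sum_ge_first2: "2 \<le> (J::nat) \<Longrightarrow> (f 0 + f 1 :: ennreal) \<le> (\<Sum>m<J. f m)"
proof -
  assume "2 \<le> J"
  then have "{0,1} \<subseteq> {..<J}" by auto
  then have "sum f {0,1} \<le> sum f {..<J}" by (intro sum_mono2) auto
  then show ?thesis by simp
qed

lemma sum_ge_first1: "1 \<le> (J::nat) \<Longrightarrow> (f 0 :: ennreal) \<le> (\<Sum>m<J. f m)"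
proof -
  assume "1 \<le> J"
  then have "{0} \<subseteq> {..<J}" by auto
  then have "sum f {0} \<le> sum f {..<J}" by (intro sum_mono2) auto
  then show ?thesis by simp
qed

lemma path_A:
  assumes "t < fst \<omega> (0,0)" "t < snd \<omega> 0" "t < top"
  shows "t < reset_time l \<omega>"
proof (cases "\<exists>j. reset_min l (fst \<omega>) j \<le> snd \<omega> j")
  case True
  then obtain J where J: "reset_time l \<omega> = (\<Sum>m<J. snd \<omega> m) + reset_min l (fst \<omega>) J"
    by (rule reset_time_cases)
  show ?thesis
  proof (cases "J = 0")
    case True then show ?thesis using J assms by simp
  next
    case False
    then have "snd \<omega> 0 \<le> (\<Sum>m<J. snd \<omega> m)" by (intro sum_ge_first1) auto
    also have "\<dots> \<le> reset_time l \<omega>" unfolding J by simp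
    finally show ?thesis using assms by simp
  qed
qed (use assms reset_time_none in auto)

lemma ennreal_less_add_helper:
  fixes a c x y :: ennreal
  assumes "a \<le> x" "c < y" "a < top"
  shows "a + c < x + y"
proof -
  have "a + c < a + y" using assms by (simp add: ennreal_add_left_cancel_less)
  also have "\<dots> \<le> x + y" using assms by (intro add_right_mono) auto
  finally show ?thesis .
qed

lemma path_B:
  assumes l: "l \<ge> 1" and b: "b < fst \<omega> (0,0)" and c1: "\<And>i. i < l \<Longrightarrow> c < fst \<omega> (1,i)"
    and r0: "a \<le> snd \<omega> 0" "snd \<omega> 0 \<le> b" and r1: "c < snd \<omega> 1"
    and t: "t \<le> a + c" and a: "a < top" and tt: "t < top"
  shows "t < reset_time l \<omega>"
proof (cases "\<exists>j. reset_min l (fst \<omega>) j \<le> snd \<omega> j")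
  case True
  then obtain J where J: "reset_time l \<omega> = (\<Sum>m<J. snd \<omega> m) + reset_min l (fst \<omega>) J"
    and JJ: "reset_min l (fst \<omega>) J \<le> snd \<omega> J"
    by (rule reset_time_cases)
  have "J \<noteq> 0"
  proof
    assume "J = 0"
    with JJ have "fst \<omega> (0,0) \<le> snd \<omega> 0" by simp
    then show False using b r0 by (meson not_le order_trans)
  qed
  then consider "J = 1" | "2 \<le> J" by linarith
  then show ?thesis
  proof cases
    case 1
    have M1: "c < reset_min l (fst \<omega>) 1" using reset_min_gt_iff[OF l] c1 by simp
    have "t \<le> a + c" by fact
    also have "\<dots> < snd \<omega> 0 + reset_min l (fst \<omega>) 1"
      using M1 r0 a by (intro ennreal_less_add_helper) auto
    also have "\<dots> = reset_time l \<omega>" unfolding J 1 by simp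
    finally show ?thesis .
  next
    case 2
    have "t \<le> a + c" by fact
    also have "\<dots> < snd \<omega> 0 + snd \<omega> 1"
      using r1 r0 a by (intro ennreal_less_add_helper) auto
    also have "\<dots> \<le> (\<Sum>m<J. snd \<omega> m)" using 2 by (intro sum_ge_first2)
    also have "\<dots> \<le> reset_time l \<omega>" unfolding J by simp
    finally show ?thesis .
  qed
qed (use tt reset_time_none in auto)

lemma sets_PiM_Collect_fin:
  assumes "finite J" "\<And>x. x \<in> J \<Longrightarrow> X x \<in> sets (M x)"
  shows "{f\<in>space (PiM UNIV M). \<forall>x\<in>J. f x \<in> X x} \<in> sets (PiM UNIV M)"
proof (rule sets.sets_Collect_finite_All[OF _ assms(1)])
  fix x assume x: "x \<in> J"
  have "{f \<in> space (PiM UNIV M). f x \<in> X x} = (\<lambda>f. f x) -` X x \<inter> space (PiM UNIV M)" by auto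
  also have "\<dots> \<in> sets (PiM UNIV M)"
    using assms(2)[OF x] by (intro measurable_sets[OF measurable_component_singleton]) auto
  finally show "{f \<in> space (PiM UNIV M). f x \<in> X x} \<in> sets (PiM UNIV M)" .
qed

lemma lower_bound:
  fixes T R :: "ennreal measure" and t a b c :: ennreal and Y :: "ennreal set"
  assumes T: "prob_space T" "sets T = sets borel" and R: "prob_space R" "sets R = sets borel"
    and l: "l \<ge> 1" and Y: "Y \<in> sets borel" "Y \<subseteq> {a..b}" and ab: "a \<le> b" and bt: "b \<le> t" and t: "t \<le> a + c" "t < top"
  shows "emeasure T {t<..} * emeasure R {t<..} + emeasure T {b<..} * emeasure T {c<..} ^ l * (emeasure R Y * emeasure R {c<..})
     \<le> emeasure (reset_law T R l) {t<..}"
proof -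
  interpret T: prob_space T by (rule T)
  interpret R: prob_space R by (rule R)
  interpret PT: product_prob_space "\<lambda>_::nat\<times>nat. T" UNIV by unfold_locales
  interpret PR: product_prob_space "\<lambda>_::nat. R" UNIV by unfold_locales
  let ?PT = "PiM UNIV (\<lambda>_::nat\<times>nat. T)" and ?PR = "PiM UNIV (\<lambda>_::nat. R)"
  have pPR: "prob_space ?PR" by (rule prob_space_PiM) (use R in auto)
  have spT[simp]: "space T = UNIV" using sets_eq_imp_space_eq[OF T(2)] by simp
  have spR[simp]: "space R = UNIV" using sets_eq_imp_space_eq[OF R(2)] by simp
  have a: "a < top" using ab t bt by (meson order.trans order.strict_trans1) 
  define J where "J = insert (0::nat,0::nat) ((\<lambda>i. (1::nat,i)) ` {..<l})"
  define XB where "XB x = (if x = (0::nat,0::nat) then {b<..} else {c<..})" for x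
  define YB where "YB x = (if x = (0::nat) then Y else {c<..})" for x
  define EAT where "EAT = {Tv\<in>space ?PT. \<forall>x\<in>{(0,0)}. Tv x \<in> {t<..}}"
  define EAR where "EAR = {Rv\<in>space ?PR. \<forall>x\<in>{0}. Rv x \<in> {t<..}}"
  define EBT where "EBT = {Tv\<in>space ?PT. \<forall>x\<in>J. Tv x \<in> XB x}"
  define EBR where "EBR = {Rv\<in>space ?PR. \<forall>x\<in>{0,1}. Rv x \<in> YB x}"
  have finJ: "finite J" unfolding J_def by simp
  have mEAT: "emeasure ?PT EAT = emeasure T {t<..}"
    unfolding EAT_def by (subst PT.emeasure_PiM_Collect) (auto simp: T(2))
  have mEAR: "emeasure ?PR EAR = emeasure R {t<..}"
    unfolding EAR_def by (subst PR.emeasure_PiM_Collect) (auto simp: R(2))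
  have "emeasure ?PT EBT = (\<Prod>x\<in>J. emeasure T (XB x))"
    unfolding EBT_def using finJ by (subst PT.emeasure_PiM_Collect) (auto simp: T(2) XB_def)
  also have "\<dots> = emeasure T {b<..} * emeasure T {c<..} ^ l"
    unfolding J_def by (subst prod.insert) (auto simp: prod.reindex inj_on_def XB_def)
  finally have mEBT: "emeasure ?PT EBT = emeasure T {b<..} * emeasure T {c<..} ^ l" .
  have "emeasure ?PR EBR = (\<Prod>x\<in>{0,1}. emeasure R (YB x))"
    unfolding EBR_def using Y by (subst PR.emeasure_PiM_Collect) (auto simp: R(2) YB_def)
  then have mEBR: "emeasure ?PR EBR = emeasure R Y * emeasure R {c<..}" by (simp add: YB_def)
  have sets: "EAT \<in> sets ?PT" "EBT \<in> sets ?PT" "EAR \<in> sets ?PR" "EBR \<in> sets ?PR"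
    unfolding EAT_def EBT_def EAR_def EBR_def using finJ Y
    by (intro sets_PiM_Collect_fin; simp add: XB_def YB_def T(2) R(2))+
  have rs: "reset_space T R = ?PT \<Otimes>\<^sub>M ?PR" by (simp add: reset_space_def)
  have mA: "emeasure (reset_space T R) (EAT \<times> EAR) = emeasure T {t<..} * emeasure R {t<..}"
    unfolding rs using sets by (simp add: sigma_finite_measure.emeasure_pair_measure_Times[OF prob_space_imp_sigma_finite[OF pPR]] mEAT mEAR)
  have mB: "emeasure (reset_space T R) (EBT \<times> EBR) = emeasure T {b<..} * emeasure T {c<..} ^ l * (emeasure R Y * emeasure R {c<..})"
    unfolding rs using sets by (simp add: sigma_finite_measure.emeasure_pair_measure_Times[OF prob_space_imp_sigma_finite[OF pPR]] mEBT mEBR)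
  have disj: "(EAT \<times> EAR) \<inter> (EBT \<times> EBR) = {}"
  proof -
    have "\<forall>x\<in>Y. \<not> t < x" using Y(2) bt by (auto simp: not_less subset_eq intro: order.trans)
    then show ?thesis by (auto simp: EAR_def EBR_def YB_def)
  qed
  have spRS: "space (reset_space T R) = UNIV"
    by (simp add: reset_space_def space_pair_measure space_PiM PiE_UNIV_domain)
  have sub: "(EAT \<times> EAR) \<union> (EBT \<times> EBR) \<subseteq> reset_time l -` {t<..} \<inter> space (reset_space T R)"
  proof
    fix \<omega> assume w: "\<omega> \<in> (EAT \<times> EAR) \<union> (EBT \<times> EBR)"
    have "t < reset_time l \<omega>"
    proof (cases "\<omega> \<in> EAT \<times> EAR")
      case True
      then have "t < fst \<omega> (0,0)" "t < snd \<omega> 0" by (auto simp: EAT_def EAR_def)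
      then show ?thesis using path_A t(2) by blast
    next
      case False
      then have wB: "fst \<omega> \<in> EBT" "snd \<omega> \<in> EBR" using w by auto
      have J0: "(0,0) \<in> J" and J1: "\<And>i. i < l \<Longrightarrow> (1,i) \<in> J" by (auto simp: J_def)
      have b1: "b < fst \<omega> (0,0)" using wB(1) J0 by (auto simp: EBT_def XB_def)
      have c1: "\<And>i. i < l \<Longrightarrow> c < fst \<omega> (1,i)"
      proof -
        fix i assume "i < l"
        then have "fst \<omega> (1,i) \<in> XB (1,i)" using wB(1) J1 by (auto simp: EBT_def)
        then show "c < fst \<omega> (1,i)" by (simp add: XB_def)
      qed
      have r0: "snd \<omega> 0 \<in> Y" and r1: "c < snd \<omega> 1" using wB(2) by (auto simp: EBR_def YB_def)
      then have "a \<le> snd \<omega> 0" "snd \<omega> 0 \<le> b" using Y(2) by auto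
      then show ?thesis using path_B[OF l b1 c1 _ _ r1 t(1) a t(2)] by blast
    qed
    then show "\<omega> \<in> reset_time l -` {t<..} \<inter> space (reset_space T R)" by (simp add: spRS)
  qed
  have setsA: "EAT \<times> EAR \<in> sets (reset_space T R)" "EBT \<times> EBR \<in> sets (reset_space T R)"
    unfolding rs using sets by auto
  have "emeasure (reset_space T R) ((EAT \<times> EAR) \<union> (EBT \<times> EBR)) \<le> emeasure (reset_space T R) (reset_time l -` {t<..} \<inter> space (reset_space T R))"
    using sub measurable_reset_time[OF T(2) R(2), of l]
    by (intro emeasure_mono) auto
  also have "\<dots> = emeasure (reset_law T R l) {t<..}"
    unfolding reset_law_def using measurable_reset_time[OF T(2) R(2), of l]
    by (subst emeasure_distr) auto
  finally show ?thesis
    using plus_emeasure[OF setsA disj] mA mB by simp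
qed

lemma le_powr_k: "0 \<le> x \<Longrightarrow> x \<le> 1 \<Longrightarrow> k \<le> 1 \<Longrightarrow> x \<le> x powr (k::real)"
  using powr_mono'[of k 1 x] by (cases "x = 0") auto

lemma powr_add_le:
  fixes a b k :: real assumes k: "0 < k" "k \<le> 1" and a: "0 \<le> a" and b: "0 \<le> b"
  shows "(a + b) powr k \<le> a powr k + b powr k"
proof (cases "a + b = 0")
  case True then show ?thesis using a b by simp
next
  case False
  define s where "s = a + b"
  have s: "s > 0" using False a b s_def by simp
  have as: "a \<le> s" using b by (simp add: s_def)
  have bs: "b \<le> s" using a by (simp add: s_def)
  have "a / s \<le> (a / s) powr k" using as a s k by (intro le_powr_k) simp_all
  moreover have "b / s \<le> (b / s) powr k" using bs b s k by (intro le_powr_k) simp_all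
  moreover have "a / s + b / s = 1" using s by (simp add: s_def add_divide_distrib[symmetric])
  ultimately have "1 \<le> (a / s) powr k + (b / s) powr k" by linarith
  then have "s powr k * 1 \<le> s powr k * ((a / s) powr k + (b / s) powr k)"
    by (intro mult_left_mono) auto
  also have "\<dots> = a powr k + b powr k"
    using s by (simp add: powr_divide distrib_left)
  finally show ?thesis by (simp add: s_def)
qed

lemma powr_sum_le:
  fixes c :: "nat \<Rightarrow> real" assumes k: "0 < k" "k \<le> 1" and c: "\<And>m. 0 \<le> c m"
  shows "(\<Sum>m<n. c m) powr k \<le> (\<Sum>m<n. c m powr k)"
proof (induction n)
  case 0 then show ?case by simp
next
  case (Suc n)
  have "(\<Sum>m<Suc n. c m) powr k \<le> (\<Sum>m<n. c m) powr k + c n powr k"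
    using powr_add_le[OF k, of "\<Sum>m<n. c m" "c n"] c by (simp add: sum_nonneg)
  also have "\<dots> \<le> (\<Sum>m<Suc n. c m powr k)" using Suc by simp
  finally show ?case .
qed

lemma prod_pow_le:
  fixes x :: "nat \<Rightarrow> real" assumes "\<And>m. 0 \<le> x m" "\<And>m. x m \<le> 1" and l: "l \<ge> 1"
  shows "(\<Prod>m<n. x m ^ (l ^ m)) \<le> (\<Prod>m<n. x m)"
proof (rule prod_mono)
  fix m assume "m \<in> {..<n}"
  have "x m ^ (l ^ m) \<le> x m ^ 1" using assms l by (intro power_decreasing) auto
  then show "0 \<le> x m ^ (l ^ m) \<and> x m ^ (l ^ m) \<le> x m" using assms by simp
qed

lemma ennreal_min_tele:
  fixes x y t :: ennreal assumes t: "t < top"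
  shows "min x t + min y (t - x) = min (x + y) t"
proof (cases "t \<le> x")
  case True
  then have "t - x = 0" using t by (simp add: diff_eq_0_iff_ennreal)
  moreover have "t \<le> x + y" using add_increasing2[of y t x] True by simp
  ultimately show ?thesis using True by (simp add: min_def)
next
  case False
  then have xt: "x < t" by simp
  then have xf: "x < top" using t by simp
  have e: "x + (t - x) = t" using xt by (simp add: add_diff_inverse_ennreal less_imp_le)
  have "min x t + min y (t - x) = x + min y (t - x)" using xt by simp
  also have "\<dots> = min (x + y) (x + (t - x))"
  proof (cases "y \<le> t - x")
    case True
    then show ?thesis using add_left_mono[OF True, of x] by (simp add: min_def)
  next
    case False
    then have "t - x \<le> y" by simp
    then show ?thesis using add_left_mono[of "t - x" y x] False by (auto simp: min_def)
  qed
  also have "\<dots> = min (x + y) t" by (simp only: e)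
  finally show ?thesis .
qed

definition Ssum :: "(nat \<Rightarrow> ennreal) \<Rightarrow> nat \<Rightarrow> ennreal" where
  "Ssum Rv m = (\<Sum>m'<m. Rv m')"

definition cc :: "ennreal \<Rightarrow> (nat \<Rightarrow> ennreal) \<Rightarrow> nat \<Rightarrow> ennreal" where
  "cc t Rv m = min (Rv m) (t - Ssum Rv m)"

definition hk :: "real \<Rightarrow> ennreal \<Rightarrow> ennreal" where
  "hk k x = (if x = top then 0 else ennreal (exp (- (enn2real x powr k))))"

lemma cc_tele: assumes t: "t < top" shows "(\<Sum>m<n. cc t Rv m) = min (Ssum Rv n) t"
proof (induction n)
  case 0 then show ?case by (simp add: Ssum_def)
next
  case (Suc n)
  have "(\<Sum>m<Suc n. cc t Rv m) = min (Ssum Rv n) t + min (Rv n) (t - Ssum Rv n)"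
    using Suc by (simp add: cc_def)
  also have "\<dots> = min (Ssum Rv n + Rv n) t" by (rule ennreal_min_tele[OF t])
  also have "\<dots> = min (Ssum Rv (Suc n)) t" by (simp add: Ssum_def)
  finally show ?case .
qed

lemma cc_le_t: "t < top \<Longrightarrow> cc t Rv m \<le> t"
  unfolding cc_def by (meson diff_le_self_ennreal min.coboundedI2)

lemma Ssum_mono: "m \<le> m' \<Longrightarrow> Ssum Rv m \<le> Ssum Rv m'"
  unfolding Ssum_def by (intro sum_mono2) auto

lemma path_upper:
  assumes tt: "t < top" and l: "l \<ge> 1" and t: "t < reset_time l (Tv, Rv)"
  shows "cc t Rv m = 0 \<or> cc t Rv m < reset_min l Tv m"
proof (cases "\<exists>j. reset_min l (fst (Tv,Rv)) j \<le> snd (Tv,Rv) j")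
  case True
  then obtain J where J: "reset_time l (Tv,Rv) = (\<Sum>m<J. Rv m) + reset_min l Tv J"
    and JJ: "reset_min l Tv J \<le> Rv J" and lt: "\<And>m. m < J \<Longrightarrow> Rv m < reset_min l Tv m"
    by (rule reset_time_cases) auto
  have tJ: "t < Ssum Rv J + reset_min l Tv J" using t J by (simp add: Ssum_def)
  consider "m < J" | "m = J" | "J < m" by linarith
  then show ?thesis
  proof cases
    case 1
    have "cc t Rv m \<le> Rv m" by (simp add: cc_def)
    then show ?thesis using lt[OF 1] by (metis order.strict_trans1)
  next
    case 2
    show ?thesis
    proof (cases "t \<le> Ssum Rv J")
      case True
      then have "t - Ssum Rv J = 0" using tt by (simp add: diff_eq_0_iff_ennreal)
      then show ?thesis using 2 by (simp add: cc_def)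
    next
      case False
      then have "Ssum Rv J < top" using tt by simp
      then have "t - Ssum Rv J < reset_min l Tv J"
        using tJ False by (subst minus_less_iff_ennreal) (auto simp: add.commute)
      moreover have "cc t Rv m \<le> t - Ssum Rv J" using 2 by (simp add: cc_def)
      ultimately show ?thesis using 2 by (metis order.strict_trans1)
    qed
  next
    case 3
    have "Ssum Rv J + reset_min l Tv J \<le> Ssum Rv J + Rv J" using JJ by (intro add_left_mono)
    also have "\<dots> = Ssum Rv (Suc J)" by (simp add: Ssum_def)
    also have "\<dots> \<le> Ssum Rv m" using 3 by (intro Ssum_mono) simp
    finally have "t \<le> Ssum Rv m" using tJ by simp
    then have "t - Ssum Rv m = 0" using tt by (simp add: diff_eq_0_iff_ennreal)
    then show ?thesis by (simp add: cc_def)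
  qed
next
  case False
  then have "Rv m < reset_min l Tv m" by (simp add: not_le)
  moreover have "cc t Rv m \<le> Rv m" by (simp add: cc_def)
  ultimately show ?thesis by (metis order.strict_trans1)
qed

lemma ineq_fixed:
  fixes k :: real assumes k: "0 < k" "k \<le> 1" and l: "l \<ge> 1" and tt: "t < top"
  shows "ennreal (\<Prod>m<n. exp (- (enn2real (cc t Rv m) powr k)) ^ (l ^ m))
     \<le> ennreal (exp (- (enn2real t powr k))) + (\<Prod>m<n. hk k (Rv m))"
proof -
  define c where "c m = enn2real (cc t Rv m)" for m
  have cfin: "cc t Rv m < top" for m using cc_le_t[OF tt, of Rv m] tt by simp
  have c0: "0 \<le> c m" for m by (simp add: c_def)
  have "(\<Prod>m<n. exp (- (c m powr k)) ^ (l ^ m)) \<le> (\<Prod>m<n. exp (- (c m powr k)))"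
    by (rule prod_pow_le[OF _ _ l]) (auto simp: c0)
  also have "\<dots> = exp (- (\<Sum>m<n. c m powr k))"
    by (simp add: exp_sum[symmetric] sum_negf)
  finally have P: "(\<Prod>m<n. exp (- (c m powr k)) ^ (l ^ m)) \<le> exp (- (\<Sum>m<n. c m powr k))" .
  show ?thesis
  proof (cases "t \<le> Ssum Rv n")
    case True
    have "(\<Sum>m<n. cc t Rv m) = t" using cc_tele[OF tt, of Rv n] True by simp
    moreover have "enn2real (\<Sum>m<n. cc t Rv m) = (\<Sum>m<n. c m)"
      using cfin by (subst enn2real_sum) (auto simp: c_def)
    ultimately have "(\<Sum>m<n. c m) = enn2real t" by simp
    then have sumc: "(\<Sum>m<n. c m) = enn2real t" .
    have "enn2real t powr k \<le> (\<Sum>m<n. c m powr k)"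
      using powr_sum_le[of k c n, OF k c0] sumc by simp
    then have "exp (- (\<Sum>m<n. c m powr k)) \<le> exp (- (enn2real t powr k))" by simp
    with P have "(\<Prod>m<n. exp (- (c m powr k)) ^ (l ^ m)) \<le> exp (- (enn2real t powr k))" by linarith
    then have "ennreal (\<Prod>m<n. exp (- (c m powr k)) ^ (l ^ m)) \<le> ennreal (exp (- (enn2real t powr k)))"
      by (rule ennreal_leI)
    then show ?thesis unfolding c_def by (simp add: add_increasing2)
  next
    case False
    have eq: "cc t Rv m = Rv m" if m: "m < n" for m
    proof -
      have "Ssum Rv m + Rv m = Ssum Rv (Suc m)" by (simp add: Ssum_def)
      also have "\<dots> \<le> Ssum Rv n" using m by (intro Ssum_mono) simp
      finally have "Rv m + Ssum Rv m \<le> t" using False by (simp add: add.commute)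
      then have "Rv m \<le> t - Ssum Rv m" by (simp add: ennreal_le_minus_iff)
      then show ?thesis by (simp add: cc_def)
    qed
    have hk_eq: "hk k (Rv m) = ennreal (exp (- (c m powr k)))" if m: "m < n" for m
      using eq[OF m] cfin[of m] by (simp add: hk_def c_def)
    have "(\<Prod>m<n. hk k (Rv m)) = (\<Prod>m<n. ennreal (exp (- (c m powr k))))"
      using hk_eq by (intro prod.cong) auto
    also have "\<dots> = ennreal (exp (- (\<Sum>m<n. c m powr k)))"
      by (subst prod_ennreal) (auto simp: exp_sum[symmetric] sum_negf)
    finally have "ennreal (\<Prod>m<n. exp (- (c m powr k)) ^ (l ^ m)) \<le> (\<Prod>m<n. hk k (Rv m))"
      using P by (simp add: ennreal_leI)
    then show ?thesis unfolding c_def by (simp add: add_increasing)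
  qed
qed

lemma hk_measurable[measurable]: "hk k \<in> borel_measurable borel"
  unfolding hk_def by measurable

lemma hk_le1: "hk k x \<le> 1"
  by (simp add: hk_def)

lemma hk_lt1: "0 < x \<Longrightarrow> hk k x < 1" if "0 < k"
proof -
  assume x: "0 < x"
  show ?thesis
  proof (cases "x = top")
    case False
    then have "0 < enn2real x" using x by (simp add: enn2real_positive_iff less_top)
    then have "0 < enn2real x powr k" by simp
    then have "exp (- (enn2real x powr k)) < 1" by simp
    then show ?thesis using False by (simp add: hk_def ennreal_less_iff ennreal_1[symmetric] del: ennreal_1)
  qed (simp add: hk_def)
qed

lemma q_lt1:
  assumes k: "0 < k" and R: "reset_law_cond R"
  shows "(\<integral>\<^sup>+ x. hk k x \<partial>R) < 1"
proof -
  have RP: "prob_space R" and Rs: "sets R = sets borel" and Rpos: "emeasure R {0<..} > 0"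
    using R by (auto simp: reset_law_cond_def)
  interpret R: prob_space R by (rule RP)
  have e: "borel_measurable R = borel_measurable borel" by (rule measurable_cong_sets[OF Rs refl])
  have hm: "hk k \<in> borel_measurable R" unfolding e by (rule hk_measurable)
  have hm2: "(\<lambda>x. 1 - hk k x) \<in> borel_measurable R" using hm by measurable
  have pos: "(\<integral>\<^sup>+ x. 1 - hk k x \<partial>R) > 0"
  proof (rule ccontr)
    assume "\<not> ?thesis"
    then have "(\<integral>\<^sup>+ x. 1 - hk k x \<partial>R) = 0" by simp
    then have "AE x in R. 1 - hk k x = 0" using hm2 by (simp add: nn_integral_0_iff_AE)
    then have "AE x in R. x \<notin> {0<..}"
    proof eventually_elim
      fix x assume "1 - hk k x = 0"
      then have "1 \<le> hk k x" by (simp add: diff_eq_0_iff_ennreal)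
      then show "x \<notin> {0<..}" using hk_lt1[OF k, of x] by (metis greaterThan_iff leD)
    qed
    then have "emeasure R {0<..} = 0"
    proof -
      have "{x. x \<noteq> (0::ennreal)} = {0<..}" using not_gr_zero by blast
      then show ?thesis using \<open>AE x in R. x \<notin> {0<..}\<close> AE_iff_measurable[of "{0<..}" R "\<lambda>x. x \<notin> {0<..}"]
        by (simp add: Rs sets_eq_imp_space_eq[OF Rs])
    qed
    then show False using Rpos by simp
  qed
  have "(\<integral>\<^sup>+ x. hk k x \<partial>R) + (\<integral>\<^sup>+ x. 1 - hk k x \<partial>R) = (\<integral>\<^sup>+ x. hk k x + (1 - hk k x) \<partial>R)"
    using hm hm2 by (simp add: nn_integral_add)
  also have "\<dots> = (\<integral>\<^sup>+ x. 1 \<partial>R)"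
    by (intro nn_integral_cong) (simp add: add_diff_inverse_ennreal hk_le1)
  also have "\<dots> = 1" by (simp add: R.emeasure_space_1)
  finally have sum1: "(\<integral>\<^sup>+ x. hk k x \<partial>R) + (\<integral>\<^sup>+ x. 1 - hk k x \<partial>R) = 1" .
  have "(\<integral>\<^sup>+ x. hk k x \<partial>R) \<le> (\<integral>\<^sup>+ x. hk k x \<partial>R) + (\<integral>\<^sup>+ x. 1 - hk k x \<partial>R)"
    by (rule add_increasing2) auto
  then have "(\<integral>\<^sup>+ x. hk k x \<partial>R) \<le> 1" using sum1 by simp
  then have fin: "(\<integral>\<^sup>+ x. hk k x \<partial>R) < top"
    using order.strict_trans1 ennreal_one_less_top by blast
  have "(\<integral>\<^sup>+ x. hk k x \<partial>R) + 0 < (\<integral>\<^sup>+ x. hk k x \<partial>R) + (\<integral>\<^sup>+ x. 1 - hk k x \<partial>R)"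
    using fin pos by (subst ennreal_add_left_cancel_less) auto
  then show ?thesis using sum1 by simp
qed

lemma PiM_prod_integral:
  assumes RP: "prob_space R" and hm: "h \<in> borel_measurable R"
  shows "(\<integral>\<^sup>+ Rv. (\<Prod>m<n. h (Rv m)) \<partial>PiM UNIV (\<lambda>_::nat. R)) = (\<integral>\<^sup>+ x. h x \<partial>R) ^ n"
proof -
  interpret R: prob_space R by (rule RP)
  interpret PR: product_prob_space "\<lambda>_::nat. R" UNIV by unfold_locales
  have "(\<integral>\<^sup>+ Rv. (\<Prod>m<n. h (Rv m)) \<partial>PiM UNIV (\<lambda>_::nat. R))
      = (\<integral>\<^sup>+ Rv. (\<Prod>m<n. h (restrict Rv {..<n} m)) \<partial>PiM UNIV (\<lambda>_::nat. R))"
    by (intro nn_integral_cong prod.cong) auto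
  also have "\<dots> = (\<integral>\<^sup>+ y. (\<Prod>m<n. h (y m)) \<partial>distr (PiM UNIV (\<lambda>_::nat. R)) (PiM {..<n} (\<lambda>_. R)) (\<lambda>x. restrict x {..<n}))"
    using hm by (subst nn_integral_distr) (auto intro!: measurable_restrict_subset)
  also have "\<dots> = (\<integral>\<^sup>+ y. (\<Prod>m<n. h (y m)) \<partial>PiM {..<n} (\<lambda>_. R))"
    by (subst PR.distr_PiM_restrict_finite) auto
  also have "\<dots> = (\<Prod>m<n. \<integral>\<^sup>+ x. h x \<partial>R)"
    using hm by (subst PR.product_nn_integral_prod) auto
  finally show ?thesis by simp
qed

lemma upper_bound:
  fixes k :: real and R :: "ennreal measure" and t :: ennreal
  assumes k: "0 < k" "k \<le> 1" and l: "l \<ge> 1" and R: "reset_law_cond R" and tt: "t < top"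
  shows "emeasure (reset_law (weibull_law k) R l) {t<..} \<le> emeasure (weibull_law k) {t<..}"
proof -
  let ?T = "weibull_law k"
  have RP: "prob_space R" and Rs: "sets R = sets borel"
    using R by (auto simp: reset_law_cond_def)
  have TP: "prob_space ?T" by (rule prob_space_weibull[OF k(1)])
  have Ts: "sets ?T = sets borel" by simp
  interpret T: prob_space ?T by (rule TP)
  interpret R: prob_space R by (rule RP)
  interpret PT: product_prob_space "\<lambda>_::nat\<times>nat. ?T" UNIV by unfold_locales
  let ?PT = "PiM UNIV (\<lambda>_::nat\<times>nat. ?T)" and ?PR = "PiM UNIV (\<lambda>_::nat. R)"
  have pPT: "prob_space ?PT" by (rule prob_space_PiM) (use TP in auto)
  have pPR: "prob_space ?PR" by (rule prob_space_PiM) (use RP in auto)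
  interpret P2: pair_prob_space ?PT ?PR
    by (intro pair_prob_space.intro pair_sigma_finite.intro prob_space_imp_sigma_finite pPT pPR)
  have spT[simp]: "space ?T = UNIV" using sets_eq_imp_space_eq[OF Ts] by simp
  have spPT: "space ?PT = UNIV" by (simp add: space_PiM PiE_UNIV_domain)
  define \<tau> where "\<tau> = enn2real t"
  have t\<tau>: "t = ennreal \<tau>" and \<tau>0: "0 \<le> \<tau>" using tt by (auto simp: \<tau>_def less_top)
  define e where "e = ennreal (exp (- (\<tau> powr k)))"
  have rhs: "emeasure ?T {t<..} = e" unfolding e_def t\<tau> by (rule weibull_tail[OF k(1) \<tau>0])
  define q where "q = (\<integral>\<^sup>+ x. hk k x \<partial>R)"
  have q1: "q < 1" unfolding q_def by (rule q_lt1[OF k(1) R])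
  have eR: "borel_measurable R = borel_measurable borel" by (rule measurable_cong_sets[OF Rs refl])
  have hmR: "hk k \<in> borel_measurable R" unfolding eR by (rule hk_measurable)
  define A where "A = reset_time l -` {t<..} \<inter> space (reset_space ?T R)"
  have rm: "reset_time l \<in> borel_measurable (reset_space ?T R)"
    by (rule measurable_reset_time[OF Ts Rs])
  have Am: "A \<in> sets (reset_space ?T R)" unfolding A_def using rm by measurable
  have rs: "reset_space ?T R = ?PT \<Otimes>\<^sub>M ?PR" by (simp add: reset_space_def)
  have lhs: "emeasure (reset_law ?T R l) {t<..} = emeasure (reset_space ?T R) A"
    unfolding reset_law_def A_def using rm by (subst emeasure_distr) auto
  have main: "emeasure (reset_space ?T R) A \<le> e + q ^ n" for n
  proof -
    have inner: "(\<integral>\<^sup>+ Tv. indicator A (Tv, Rv) \<partial>?PT) \<le> e + (\<Prod>m<n. hk k (Rv m))" for Rv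
    proof -
      define X where "X m = (if cc t Rv m = 0 then UNIV else {cc t Rv m<..})" for m
      define Jn where "Jn = Sigma {..<n} (\<lambda>m. {..<l^m})"
      define B where "B = {Tv \<in> space ?PT. \<forall>x\<in>Jn. Tv x \<in> X (fst x)}"
      have finJn: "finite Jn" unfolding Jn_def by auto
      have Xs: "X m \<in> sets ?T" for m by (simp add: X_def)
      have sub: "indicator A (Tv, Rv) \<le> (indicator B Tv :: ennreal)" for Tv
      proof (cases "(Tv, Rv) \<in> A")
        case True
        then have tr: "t < reset_time l (Tv, Rv)" by (simp add: A_def)
        have "Tv \<in> B" unfolding B_def
        proof (intro CollectI conjI ballI)
          show "Tv \<in> space ?PT" by (simp add: spPT)
          fix x assume "x \<in> Jn"
          then obtain m i where x: "x = (m,i)" "i < l^m" by (auto simp: Jn_def)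
          from path_upper[OF tt l tr, of m]
          have "cc t Rv m = 0 \<or> cc t Rv m < reset_min l Tv m" .
          then show "Tv x \<in> X (fst x)"
            using x reset_min_gt_iff[OF l, of "cc t Rv m" Tv m] by (auto simp: X_def)
        qed
        then show ?thesis by (simp add: indicator_def)
      qed simp
      have "(\<integral>\<^sup>+ Tv. indicator A (Tv, Rv) \<partial>?PT) \<le> (\<integral>\<^sup>+ Tv. indicator B Tv \<partial>?PT)"
        by (intro nn_integral_mono sub)
      also have "\<dots> = emeasure ?PT B"
        using finJn Xs unfolding B_def by (intro nn_integral_indicator sets_PiM_Collect_fin) auto
      also have "\<dots> = (\<Prod>x\<in>Jn. emeasure ?T (X (fst x)))"
        unfolding B_def using finJn Xs by (subst PT.emeasure_PiM_Collect) auto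
      also have "\<dots> = (\<Prod>m<n. \<Prod>i<l^m. emeasure ?T (X m))"
        unfolding Jn_def by (subst prod.Sigma) (auto intro!: prod.cong simp: split_beta)
      also have "\<dots> = (\<Prod>m<n. ennreal (exp (- (enn2real (cc t Rv m) powr k))) ^ (l ^ m))"
      proof (intro prod.cong refl)
        fix m
        have "emeasure ?T (X m) = ennreal (exp (- (enn2real (cc t Rv m) powr k)))"
        proof (cases "cc t Rv m = 0")
          case True
          then show ?thesis using T.emeasure_space_1 k by (simp add: X_def)
        next
          case False
          have "cc t Rv m < top" using cc_le_t[OF tt, of Rv m] tt by simp
          then have "cc t Rv m = ennreal (enn2real (cc t Rv m))" by (simp add: less_top)
          then show ?thesis using False weibull_tail[OF k(1), of "enn2real (cc t Rv m)"]
            by (simp add: X_def)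
        qed
        then show "(\<Prod>i<l^m. emeasure ?T (X m)) = ennreal (exp (- (enn2real (cc t Rv m) powr k))) ^ (l ^ m)"
          by simp
      qed
      also have "\<dots> = ennreal (\<Prod>m<n. exp (- (enn2real (cc t Rv m) powr k)) ^ (l ^ m))"
        by (simp add: ennreal_power prod_ennreal)
      also have "\<dots> \<le> e + (\<Prod>m<n. hk k (Rv m))"
        unfolding e_def \<tau>_def by (rule ineq_fixed[OF k l tt])
      finally show ?thesis .
    qed
    have "emeasure (reset_space ?T R) A = (\<integral>\<^sup>+ \<omega>. indicator A \<omega> \<partial>(?PT \<Otimes>\<^sub>M ?PR))"
      using Am unfolding rs by (simp add: nn_integral_indicator)
    also have "\<dots> = (\<integral>\<^sup>+ Rv. (\<integral>\<^sup>+ Tv. indicator A (Tv, Rv) \<partial>?PT) \<partial>?PR)"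
      using Am unfolding rs by (intro P2.nn_integral_snd[symmetric]) auto
    also have "\<dots> \<le> (\<integral>\<^sup>+ Rv. e + (\<Prod>m<n. hk k (Rv m)) \<partial>?PR)"
      by (intro nn_integral_mono inner)
    also have "\<dots> = e + (\<integral>\<^sup>+ Rv. (\<Prod>m<n. hk k (Rv m)) \<partial>?PR)"
    proof -
      have pm: "(\<lambda>Rv. \<Prod>m<n. hk k (Rv m)) \<in> borel_measurable ?PR"
        using hmR by measurable
      show ?thesis using pm P2.M2.emeasure_space_1 by (subst nn_integral_add) auto
    qed
    also have "\<dots> = e + q ^ n" unfolding q_def by (simp add: PiM_prod_integral[OF RP hmR])
    finally show ?thesis .
  qed
  define q' where "q' = enn2real q"
  have qt: "q < top" using q1 order.strict_trans ennreal_one_less_top by blast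
  have qe: "q = ennreal q'" using qt by (simp add: q'_def less_top)
  have qq: "q = ennreal q'" "0 \<le> q'" "q' < 1"
    using qe q1 by (auto simp: q'_def) (metis ennreal_less_one_iff)
  have lim: "(\<lambda>n. e + q ^ n) \<longlonglongrightarrow> e + 0"
  proof (intro tendsto_add tendsto_const)
    have "(\<lambda>n. ennreal (q' ^ n)) \<longlonglongrightarrow> ennreal 0"
      using qq by (intro tendsto_ennrealI LIMSEQ_power_zero) auto
    then show "(\<lambda>n. q ^ n) \<longlonglongrightarrow> 0" using qq by (simp add: ennreal_power)
  qed
  have "emeasure (reset_space ?T R) A \<le> e"
    using LIMSEQ_le_const[OF lim, of "emeasure (reset_space ?T R) A"] main by simp
  then show ?thesis using lhs rhs by simp
qed

lemma delta_exists:
  fixes k :: real and l :: nat assumes k: "k > 1" and l: "l \<ge> 1"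
  shows "\<exists>\<delta>. 0 < \<delta> \<and> \<delta> < 1/4 \<and> (1 - \<delta>) powr k + real l * (2 * \<delta>) powr k < 1"
proof -
  define C where "C = real l * 2 powr k"
  have C: "C > 0" using l by (simp add: C_def)
  define \<delta> where "\<delta> = min (1/8) ((1 / (2 * C)) powr (1 / (k - 1)))"
  have d0: "0 < \<delta>" using C by (simp add: \<delta>_def)
  have d1: "\<delta> < 1/4" by (simp add: \<delta>_def)
  have "\<delta> powr (k - 1) \<le> ((1 / (2 * C)) powr (1 / (k - 1))) powr (k - 1)"
    using d0 k by (intro powr_mono2) (auto simp: \<delta>_def)
  also have "\<dots> = 1 / (2 * C)" using k C by (simp add: powr_powr)
  finally have dk: "\<delta> powr (k - 1) \<le> 1 / (2 * C)" .
  have "real l * (2 * \<delta>) powr k = C * (\<delta> powr (k - 1) * \<delta>)"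
    using d0 by (simp add: C_def powr_mult powr_diff)
  also have "\<dots> \<le> C * (1 / (2 * C) * \<delta>)"
    using dk d0 C by (intro mult_left_mono mult_right_mono) auto
  also have "\<dots> = \<delta> / 2" using C by simp
  finally have A: "real l * (2 * \<delta>) powr k \<le> \<delta> / 2" .
  have "(1 - \<delta>) powr k \<le> (1 - \<delta>) powr 1"
    using d0 d1 k by (intro powr_mono') auto
  then have B: "(1 - \<delta>) powr k \<le> 1 - \<delta>" using d1 by simp
  show ?thesis using A B d0 d1 by (intro exI[of _ \<delta>]) auto
qed

lemma c_forward:
  fixes k a :: real assumes k: "0 < k" "k \<le> 1" and l: "l \<ge> 1" and a: "0 \<le> a" "a \<le> 1"
  shows "a powr k + real l * (1 - a) powr k \<ge> 1"
proof -
  have "a \<le> a powr k" using a k by (intro le_powr_k) auto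
  moreover have "1 - a \<le> (1 - a) powr k" using a k by (intro le_powr_k) auto
  moreover have "1 * (1 - a) powr k \<le> real l * (1 - a) powr k"
    by (rule mult_right_mono) (use l in auto)
  ultimately show ?thesis by linarith
qed

lemma c_backward:
  fixes k :: real assumes k: "k > 1" and l: "l \<ge> 1"
  shows "\<exists>a. 0 \<le> a \<and> a \<le> 1 \<and> a powr k + real l * (1 - a) powr k < 1"
proof -
  obtain \<delta> where d: "0 < \<delta>" "\<delta> < 1/4" "(1 - \<delta>) powr k + real l * (2 * \<delta>) powr k < 1"
    using delta_exists[OF k l] by blast
  have "\<delta> powr k \<le> (2 * \<delta>) powr k" using d k by (intro powr_mono2) auto
  then have "real l * \<delta> powr k \<le> real l * (2 * \<delta>) powr k" by (intro mult_left_mono) auto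
  then show ?thesis using d by (intro exI[of _ "1 - \<delta>"]) auto
qed

definition gI :: "real \<Rightarrow> nat \<Rightarrow> real \<Rightarrow> real \<Rightarrow> real" where
  "gI k l t u = exp (- (t powr k) * (u powr k + real l * (1 - u) powr k - 1))"

lemma gI_cont: "k > 0 \<Longrightarrow> continuous_on {0..1} (gI k l t)"
  unfolding gI_def by (intro continuous_intros continuous_on_powr') auto

lemma LBINT_01: "(LBINT u=0..1. f u) = (LINT u|lborel. indicator {0..1::real} u *\<^sub>R f u)"
  using interval_integral_Icc[of 0 1 f] by (simp add: zero_ereal_def one_ereal_def set_lebesgue_integral_def)

lemma e_forward:
  fixes k t :: real assumes k: "0 < k" "k \<le> 1" and l: "l \<ge> 1" and t: "t > 0"
  shows "(LBINT u=0..1. exp (- (t powr k) * (u powr k + real l * (1 - u) powr k - 1))) \<le> 1"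
proof -
  have int: "integrable lborel (\<lambda>u. indicator {0..1::real} u *\<^sub>R gI k l t u)"
    using borel_integrable_atLeastAtMost'[OF gI_cont[OF k(1)]] by (simp add: set_integrable_def)
  have ind: "integrable lborel (indicator {0..1::real} :: real \<Rightarrow> real)"
    by (rule integrable_real_indicator) auto
  have "(LINT u|lborel. indicator {0..1::real} u *\<^sub>R gI k l t u) \<le> (LINT u|lborel. indicator {0..1::real} u)"
  proof (rule integral_mono[OF int ind])
    fix u :: real
    show "indicator {0..1} u *\<^sub>R gI k l t u \<le> indicator {0..1} u"
    proof (cases "u \<in> {0..1}")
      case True
      then have "0 \<le> u powr k + real l * (1 - u) powr k - 1" using c_forward[OF k l, of u] by auto
      then have "- (t powr k) * (u powr k + real l * (1 - u) powr k - 1) \<le> 0"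
        using t by (simp add: mult_nonneg_nonneg)
      then have "gI k l t u \<le> 1" by (simp add: gI_def)
      then show ?thesis using True by simp
    qed simp
  qed
  also have "\<dots> = 1" by simp
  finally show ?thesis unfolding LBINT_01 gI_def by simp
qed

lemma e_backward:
  fixes k :: real assumes k: "k > 1" and l: "l \<ge> 1"
  shows "\<exists>t>0. (LBINT u=0..1. exp (- (t powr k) * (u powr k + real l * (1 - u) powr k - 1))) > 1"
proof -
  obtain \<delta> where d: "0 < \<delta>" "\<delta> < 1/4" "(1 - \<delta>) powr k + real l * (2 * \<delta>) powr k < 1"
    using delta_exists[OF k l] by blast
  define \<eta> where "\<eta> = 1 - ((1 - \<delta>) powr k + real l * (2 * \<delta>) powr k)"
  have \<eta>: "\<eta> > 0" using d by (simp add: \<eta>_def)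
  define t where "t = (1 / (\<delta> * \<eta>)) powr (1 / k)"
  have t0: "t > 0" using d \<eta> by (simp add: t_def)
  have tk: "t powr k = 1 / (\<delta> * \<eta>)" using d \<eta> k by (simp add: t_def powr_powr)
  define E where "E = exp (1 / \<delta>)"
  have lowg: "E \<le> gI k l t u" if u: "u \<in> {1 - 2*\<delta>..1 - \<delta>}" for u
  proof -
    have u0: "0 \<le> u" "u \<le> 1" using u d by auto
    have "u powr k \<le> (1 - \<delta>) powr k" using u u0 k by (intro powr_mono2) auto
    moreover have "(1 - u) powr k \<le> (2 * \<delta>) powr k" using u u0 k by (intro powr_mono2) auto
    then have "real l * (1 - u) powr k \<le> real l * (2 * \<delta>) powr k" by (intro mult_left_mono) auto
    ultimately have "u powr k + real l * (1 - u) powr k - 1 \<le> - \<eta>" by (simp add: \<eta>_def)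
    then have "t powr k * \<eta> \<le> t powr k * (- (u powr k + real l * (1 - u) powr k - 1))"
      by (intro mult_left_mono) auto
    then have "t powr k * \<eta> \<le> - (t powr k) * (u powr k + real l * (1 - u) powr k - 1)"
      by (simp add: algebra_simps)
    moreover have "t powr k * \<eta> = 1 / \<delta>" using tk \<eta> by simp
    ultimately show ?thesis by (simp add: E_def gI_def)
  qed
  have int: "integrable lborel (\<lambda>u. indicator {0..1::real} u *\<^sub>R gI k l t u)"
    using borel_integrable_atLeastAtMost'[OF gI_cont] k by (simp add: set_integrable_def)
  have ind: "integrable lborel (\<lambda>u. E * indicator {1 - 2*\<delta>..1 - \<delta>} u :: real)"
    using d by (intro integrable_mult_right integrable_real_indicator) auto
  have "(LINT u|lborel. E * indicator {1 - 2*\<delta>..1 - \<delta>} u) \<le> (LINT u|lborel. indicator {0..1::real} u *\<^sub>R gI k l t u)"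
  proof (rule integral_mono[OF ind int])
    fix u :: real
    show "E * indicator {1 - 2*\<delta>..1 - \<delta>} u \<le> indicator {0..1} u *\<^sub>R gI k l t u"
    proof (cases "u \<in> {1 - 2*\<delta>..1 - \<delta>}")
      case True
      then have "u \<in> {0..1}" using d by auto
      then show ?thesis using True lowg[OF True] by simp
    next
      case False
      have "0 \<le> indicator {0..1} u *\<^sub>R gI k l t u" by (simp add: gI_def)
      then show ?thesis using False by simp
    qed
  qed
  moreover have "(LINT u|lborel. E * indicator {1 - 2*\<delta>..1 - \<delta>} u) = E * \<delta>"
    using d by simp
  moreover have "E * \<delta> > 1"
  proof -
    have "1 / \<delta> < exp (1 / \<delta>)" using exp_gt_zero[of "1/\<delta>"] exp_ge_add_one_self[of "1/\<delta>"] by linarith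
    then show ?thesis using d by (simp add: E_def field_simps)
  qed
  ultimately show ?thesis unfolding LBINT_01 gI_def using t0 by (intro exI[of _ t]) auto
qed

lemma sets_dirac[simp]: "sets (dirac_law r) = sets borel"
  by (simp add: dirac_law_def)

lemma dirac_counter:
  fixes k :: real and l :: nat assumes k: "k > 1" and l: "l \<ge> 1"
  shows "\<exists>r>0. \<not> st_le (reset_law (weibull_law k) (dirac_law r) l) (weibull_law k)"
proof -
  obtain \<delta> where d: "0 < \<delta>" "\<delta> < 1/4" "(1 - \<delta>) powr k + real l * (2 * \<delta>) powr k < 1"
    using delta_exists[OF k l] by blast
  define r where "r = 1 - \<delta>"
  have r: "r > 0" "\<delta> < r" "r \<le> 1" using d by (auto simp: r_def)
  have k0: "k > 0" using k by simp
  have DP: "prob_space (dirac_law r)" by (simp add: dirac_law_def prob_space_return)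
  have DR1: "emeasure (dirac_law r) {ennreal r} = 1" by (simp add: dirac_law_def)
  have DR2: "emeasure (dirac_law r) {ennreal \<delta><..} = 1"
    using r d by (simp add: dirac_law_def ennreal_less_iff indicator_def)
  have "ennreal (r + \<delta>) = ennreal r + ennreal \<delta>" using r d by (intro ennreal_plus) auto
  then have sum1: "(1::ennreal) \<le> ennreal r + ennreal \<delta>" by (simp add: r_def)
  have "emeasure (weibull_law k) {1<..} * emeasure (dirac_law r) {1<..} +
        emeasure (weibull_law k) {ennreal r<..} * emeasure (weibull_law k) {ennreal \<delta><..} ^ l *
        (emeasure (dirac_law r) {ennreal r} * emeasure (dirac_law r) {ennreal \<delta><..})
      \<le> emeasure (reset_law (weibull_law k) (dirac_law r) l) {1<..}"
    using r sum1 by (intro lower_bound[OF prob_space_weibull[OF k0] sets_weibull DP sets_dirac l])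
      (auto simp: ennreal_leI)
  then have "emeasure (weibull_law k) {ennreal r<..} * emeasure (weibull_law k) {ennreal \<delta><..} ^ l *
        (emeasure (dirac_law r) {ennreal r} * emeasure (dirac_law r) {ennreal \<delta><..})
      \<le> emeasure (reset_law (weibull_law k) (dirac_law r) l) {1<..}"
    by (rule order_trans[OF add_increasing[OF zero_le order_refl]])
  then have "ennreal (exp (- (r powr k))) * ennreal (exp (- (\<delta> powr k))) ^ l
      \<le> emeasure (reset_law (weibull_law k) (dirac_law r) l) {1<..}"
    using weibull_tail[OF k0, of r] weibull_tail[OF k0, of \<delta>] r d DR1 DR2
    by simp
  moreover have "ennreal (exp (- (r powr k))) * ennreal (exp (- (\<delta> powr k))) ^ l
      = ennreal (exp (- (r powr k)) * exp (- (\<delta> powr k)) ^ l)"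
    by (subst ennreal_mult) (auto simp: ennreal_power)
  moreover have "exp (- (r powr k)) * exp (- (\<delta> powr k)) ^ l = exp (- (r powr k + real l * \<delta> powr k))"
  proof -
    have "exp (- (\<delta> powr k)) ^ l = exp (real l * - (\<delta> powr k))" by (rule exp_of_nat_mult[symmetric])
    then have "exp (- (r powr k)) * exp (- (\<delta> powr k)) ^ l = exp (- (r powr k) + real l * - (\<delta> powr k))"
      by (simp only: exp_add)
    also have "- (r powr k) + real l * - (\<delta> powr k) = - (r powr k + real l * \<delta> powr k)" by simp
    finally show ?thesis .
  qed
  ultimately have lbd: "ennreal (exp (- (r powr k + real l * \<delta> powr k))) \<le> emeasure (reset_law (weibull_law k) (dirac_law r) l) {1<..}"
    by simp
  have "\<delta> powr k \<le> (2 * \<delta>) powr k" using d k by (intro powr_mono2) auto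
  then have "real l * \<delta> powr k \<le> real l * (2 * \<delta>) powr k" by (intro mult_left_mono) auto
  then have "r powr k + real l * \<delta> powr k < 1" using d by (simp add: r_def)
  then have "exp (- 1) < exp (- (r powr k + real l * \<delta> powr k))" by simp
  then have "emeasure (weibull_law k) {1<..} < emeasure (reset_law (weibull_law k) (dirac_law r) l) {1<..}"
  proof -
    have W1: "emeasure (weibull_law k) {1<..} = ennreal (exp (- 1))"
      using weibull_tail[OF k0, of 1] by simp
    have "ennreal (exp (- 1)) < ennreal (exp (- (r powr k + real l * \<delta> powr k)))"
      using \<open>exp (- 1) < exp (- (r powr k + real l * \<delta> powr k))\<close> by (intro ennreal_lessI) auto
    then show ?thesis unfolding W1 using lbd by (rule order.strict_trans2)
  qed
  then have "\<not> st_le (reset_law (weibull_law k) (dirac_law r) l) (weibull_law k)"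
    unfolding st_le_def not_all by (intro exI[of _ 1]) (auto simp: not_le)
  then show ?thesis using r by blast
qed

lemma ennreal_combine:
  fixes x1 x2 y1 y2 y3 y4 :: real
  assumes "0 \<le> x1" "0 \<le> x2" "0 \<le> y1" "0 \<le> y2" "0 \<le> y3" "0 \<le> y4"
  shows "ennreal x1 * ennreal x2 + ennreal y1 * ennreal y2 ^ l * (ennreal y3 * ennreal y4)
     = ennreal (x1 * x2 + y1 * y2 ^ l * (y3 * y4))"
  using assms by (simp add: ennreal_mult ennreal_power ennreal_plus)

lemma exp_counter:
  fixes k :: real and l :: nat assumes k: "k > 1" and l: "l \<ge> 1"
  shows "\<exists>\<mu>>0. \<not> st_le (reset_law (weibull_law k) (exp_law \<mu>) l) (weibull_law k)"
proof -
  obtain \<delta> where d: "0 < \<delta>" "\<delta> < 1/4" "(1 - \<delta>) powr k + real l * (2 * \<delta>) powr k < 1"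
    using delta_exists[OF k l] by blast
  have k0: "k > 0" using k by simp
  define \<eta> where "\<eta> = 1 - ((1 - \<delta>) powr k + real l * (2 * \<delta>) powr k)"
  have \<eta>: "\<eta> > 0" using d by (simp add: \<eta>_def)
  define \<tau> where "\<tau> = (1 / (\<delta> * \<eta>)) powr (1 / k)"
  have t0: "\<tau> > 0" using d \<eta> by (simp add: \<tau>_def)
  have tk: "\<tau> powr k = 1 / (\<delta> * \<eta>)" using d \<eta> k by (simp add: \<tau>_def powr_powr)
  define a where "a = \<tau> * (1 - 2 * \<delta>)"
  define b where "b = \<tau> * (1 - \<delta>)"
  define c where "c = \<tau> * (2 * \<delta>)"
  have abc: "0 \<le> a" "a \<le> b" "b \<le> \<tau>" "0 \<le> c" "a + c = \<tau>" "b - a = \<tau> * \<delta>"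
    using d t0 by (auto simp: a_def b_def c_def algebra_simps)
  define K where "K = exp (- (b powr k)) * exp (- (c powr k)) ^ l"
  have K0: "K > 0" by (simp add: K_def)
  have bk: "b powr k = \<tau> powr k * (1 - \<delta>) powr k" unfolding b_def by (rule powr_mult)
  have ck: "c powr k = \<tau> powr k * (2 * \<delta>) powr k" unfolding c_def by (rule powr_mult)
  have "b powr k + real l * c powr k = \<tau> powr k * (1 - \<eta>)"
    unfolding bk ck \<eta>_def by (simp add: algebra_simps)
  also have "\<dots> = \<tau> powr k - 1 / \<delta>" using tk \<eta> d by (simp add: field_simps)
  finally have bc: "b powr k + real l * c powr k = \<tau> powr k - 1 / \<delta>" .
  have "K = exp (- (b powr k + real l * c powr k))"
  proof -
    have "exp (- (c powr k)) ^ l = exp (real l * - (c powr k))" by (rule exp_of_nat_mult[symmetric])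
    then have "K = exp (- (b powr k) + real l * - (c powr k))" unfolding K_def by (simp only: exp_add)
    also have "- (b powr k) + real l * - (c powr k) = - (b powr k + real l * c powr k)" by simp
    finally show ?thesis .
  qed
  also have "\<dots> = exp (- (\<tau> powr k)) * exp (1 / \<delta>)" unfolding bc by (simp add: exp_add[symmetric])
  finally have Keq: "K = exp (- (\<tau> powr k)) * exp (1 / \<delta>)" .
  have "1 / \<delta> < exp (1 / \<delta>)" using exp_gt_zero[of "1/\<delta>"] exp_ge_add_one_self[of "1/\<delta>"] by linarith
  then have dexp: "1 < \<delta> * exp (1 / \<delta>)" using d by (simp add: field_simps)
  have Kd: "exp (- (\<tau> powr k)) < K * \<delta>"
    using dexp unfolding Keq by (simp add: mult.assoc mult.commute)
  define g where "g \<mu> = exp (- (\<tau> powr k)) * exp (- \<tau> * \<mu>) + K * ((exp (- a * \<mu>) - exp (- b * \<mu>)) * exp (- c * \<mu>))" for \<mu>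
  define D where "D = exp (- (\<tau> powr k)) * (- \<tau>) + K * (b - a)"
  have D0: "D > 0"
  proof -
    have "D = \<tau> * (K * \<delta> - exp (- (\<tau> powr k)))" using abc by (simp add: D_def algebra_simps)
    then show ?thesis using Kd t0 by simp
  qed
  have der: "DERIV g 0 :> D"
    unfolding g_def D_def by (auto intro!: derivative_eq_intros simp: algebra_simps)
  obtain dd where dd: "dd > 0" "\<And>h. h > 0 \<Longrightarrow> h < dd \<Longrightarrow> g 0 < g (0 + h)"
    using DERIV_pos_inc_right[OF der D0] by blast
  define \<mu> where "\<mu> = dd / 2"
  have mu: "\<mu> > 0" using dd by (simp add: \<mu>_def)
  have gmu: "g 0 < g \<mu>" using dd(2)[of \<mu>] dd by (simp add: \<mu>_def)
  have g0: "g 0 = exp (- (\<tau> powr k))" by (simp add: g_def)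
  have EP: "prob_space (exp_law \<mu>)" by (rule prob_space_exp_law[OF mu])
  have sumt: "ennreal \<tau> \<le> ennreal a + ennreal c"
  proof -
    have "ennreal (a + c) = ennreal a + ennreal c" using abc by (intro ennreal_plus) auto
    then show ?thesis using abc by simp
  qed
  have "emeasure (weibull_law k) {ennreal \<tau><..} * emeasure (exp_law \<mu>) {ennreal \<tau><..} +
        emeasure (weibull_law k) {ennreal b<..} * emeasure (weibull_law k) {ennreal c<..} ^ l *
        (emeasure (exp_law \<mu>) {ennreal a<..ennreal b} * emeasure (exp_law \<mu>) {ennreal c<..})
      \<le> emeasure (reset_law (weibull_law k) (exp_law \<mu>) l) {ennreal \<tau><..}"
    using abc sumt by (intro lower_bound[OF prob_space_weibull[OF k0] sets_weibull EP sets_exp_law l])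
      (auto simp: ennreal_leI)
  also note le = calculation
  have "emeasure (weibull_law k) {ennreal \<tau><..} * emeasure (exp_law \<mu>) {ennreal \<tau><..} +
        emeasure (weibull_law k) {ennreal b<..} * emeasure (weibull_law k) {ennreal c<..} ^ l *
        (emeasure (exp_law \<mu>) {ennreal a<..ennreal b} * emeasure (exp_law \<mu>) {ennreal c<..})
      = ennreal (g \<mu>)"
  proof -
    have ab: "exp (- b * \<mu>) \<le> exp (- a * \<mu>)" using abc mu by (simp add: mult_right_mono)
    show ?thesis
      unfolding weibull_tail[OF k0 abc(4)] weibull_tail[OF k0 order.trans[OF abc(1) order.trans[OF abc(2) abc(3)]]]
        weibull_tail[OF k0 order.trans[OF abc(1) abc(2)]]
        exp_tail[OF mu abc(4)] exp_tail[OF mu order.trans[OF abc(1) order.trans[OF abc(2) abc(3)]]]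
        exp_interval[OF mu abc(1) abc(2)]
      using ab by (subst ennreal_combine) (auto simp: g_def K_def mult.assoc)
  qed
  moreover have "emeasure (weibull_law k) {ennreal \<tau><..} = ennreal (g 0)"
    using weibull_tail[OF k0, of \<tau>] t0 g0 by simp
  moreover have "ennreal (g 0) < ennreal (g \<mu>)"
  proof -
    have "0 < g \<mu>" using gmu g0 by (metis exp_gt_zero order.strict_trans)
    then show ?thesis using gmu by (intro ennreal_lessI) auto
  qed
  ultimately have "emeasure (weibull_law k) {ennreal \<tau><..} < emeasure (reset_law (weibull_law k) (exp_law \<mu>) l) {ennreal \<tau><..}"
    using le by (metis order.strict_trans2)
  then have "\<not> st_le (reset_law (weibull_law k) (exp_law \<mu>) l) (weibull_law k)"
    unfolding st_le_def not_all by (intro exI[of _ "ennreal \<tau>"]) (auto simp: not_le)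
  then show ?thesis using mu by blast
qed

theorem mainTheorem17:
  fixes k :: real and l :: nat
  assumes "k > 0" and "l \<ge> 2"
  shows "(k \<le> 1 \<longleftrightarrow> (\<forall>R. reset_law_cond R \<longrightarrow> st_le (reset_law (weibull_law k) R l) (weibull_law k)))
    \<and> (k \<le> 1 \<longleftrightarrow> (\<forall>r::real. r > 0 \<longrightarrow> st_le (reset_law (weibull_law k) (dirac_law r) l) (weibull_law k)))
    \<and> (k \<le> 1 \<longleftrightarrow> (\<forall>a::real. 0 \<le> a \<and> a \<le> 1 \<longrightarrow> a powr k + real l * (1 - a) powr k \<ge> 1))
    \<and> (k \<le> 1 \<longleftrightarrow> (\<forall>\<mu>::real. \<mu> > 0 \<longrightarrow> st_le (reset_law (weibull_law k) (exp_law \<mu>) l) (weibull_law k)))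
    \<and> (k \<le> 1 \<longleftrightarrow> (\<forall>t::real. t > 0 \<longrightarrow>
          (LBINT u=0..1. exp (- (t powr k) * (u powr k + real l * (1 - u) powr k - 1))) \<le> 1))"
proof -
  have k: "k > 0" and l: "l \<ge> 1" using assms by auto
  have up: "st_le (reset_law (weibull_law k) R l) (weibull_law k)" if "k \<le> 1" "reset_law_cond R" for R
    unfolding st_le_def using upper_bound[OF k that(1) l that(2)] by (auto simp: less_top)
  have A: "k \<le> 1 \<longleftrightarrow> (\<forall>R. reset_law_cond R \<longrightarrow> st_le (reset_law (weibull_law k) R l) (weibull_law k))"
  proof
    assume "\<forall>R. reset_law_cond R \<longrightarrow> st_le (reset_law (weibull_law k) R l) (weibull_law k)"
    then show "k \<le> 1" using dirac_counter[OF _ l] reset_law_cond_dirac by (meson not_le)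
  qed (use up in auto)
  have B: "k \<le> 1 \<longleftrightarrow> (\<forall>r::real. r > 0 \<longrightarrow> st_le (reset_law (weibull_law k) (dirac_law r) l) (weibull_law k))"
  proof
    assume "\<forall>r::real. r > 0 \<longrightarrow> st_le (reset_law (weibull_law k) (dirac_law r) l) (weibull_law k)"
    then show "k \<le> 1" using dirac_counter[OF _ l] by (meson not_le)
  qed (use up reset_law_cond_dirac in auto)
  have C: "k \<le> 1 \<longleftrightarrow> (\<forall>a::real. 0 \<le> a \<and> a \<le> 1 \<longrightarrow> a powr k + real l * (1 - a) powr k \<ge> 1)"
  proof
    assume "\<forall>a::real. 0 \<le> a \<and> a \<le> 1 \<longrightarrow> a powr k + real l * (1 - a) powr k \<ge> 1"
    then show "k \<le> 1" using c_backward[OF _ l] by (meson not_le)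
  qed (use c_forward[OF k _ l] in auto)
  have D: "k \<le> 1 \<longleftrightarrow> (\<forall>\<mu>::real. \<mu> > 0 \<longrightarrow> st_le (reset_law (weibull_law k) (exp_law \<mu>) l) (weibull_law k))"
  proof
    assume "\<forall>\<mu>::real. \<mu> > 0 \<longrightarrow> st_le (reset_law (weibull_law k) (exp_law \<mu>) l) (weibull_law k)"
    then show "k \<le> 1" using exp_counter[OF _ l] by (meson not_le)
  qed (use up reset_law_cond_exp in auto)
  have E: "k \<le> 1 \<longleftrightarrow> (\<forall>t::real. t > 0 \<longrightarrow>
          (LBINT u=0..1. exp (- (t powr k) * (u powr k + real l * (1 - u) powr k - 1))) \<le> 1)"
  proof
    assume "\<forall>t::real. t > 0 \<longrightarrow>
          (LBINT u=0..1. exp (- (t powr k) * (u powr k + real l * (1 - u) powr k - 1))) \<le> 1"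
    then show "k \<le> 1" using e_backward[OF _ l] by (meson not_le)
  qed (use e_forward[OF k _ l] in auto)
  show ?thesis using A B C D E by blast
qed

end
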